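(* Let $\mathcal A$ be a finite set of monomials of $S=K[x_1,\ldots,x_n]$, minimal with respect to divisibility, let $\alpha=(k_1,\ldots,k_n)\in\mathbb N^n$, fix $i$, and let $\beta=\alpha+\epsilon_i$. Let $\gamma=\mathbf 1+\epsilon_{ik_i}\in\mathbb N^{|\alpha|}$, where $\mathbf 1$ is the all-ones vector and $\epsilon_{ik_i}$ is the unit vector at the coordinate corresponding to the variable $x_{ik_i}$ of $S^\alpha$. Then there is a $K$-algebra isomorphism $K[(\mathcal A^\alpha)^\gamma]\cong K[\mathcal A^\beta]$ (induced by a relabeling of variables).
   Context: $\mathbb N$ denotes the positive integers. For $\alpha=(k_1,\ldots,k_n)$, $S^\alpha=K[x_{ij}:1\le i\le n,1\le j\le k_i]$, $\pi:S^\alpha\to S$, $x_{ij}\mapsto x_i$, and for a set $\mathcal A$ of monomials of $S$ minimal w.r.t. divisibility, $\mathcal A^\alpha$ is the set of monomials $w\in S^\alpha$ with $\pi(w)\in\mathcal A$. The same construction is applied to $\mathcal A^\alpha$, viewed as a set of monomials in the $|\alpha|=k_1+\cdots+k_n$ variables $x_{ij}$ of $S^\alpha$, with respect to $\gamma\in\mathbb N^{|\alpha|}$, giving $(\mathcal A^\alpha)^\gamma$. $K[\mathcal B]$ denotes the $K$-algebra generated by a set of monomials $\mathcal B$. *)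

theory Defs
  imports Main "HOL-Library.Poly_Mapping"
begin

type_synonym 'v monomial = "'v \<Rightarrow>\<^sub>0 nat"
type_synonym ('v,'k) mpoly = "('v \<Rightarrow>\<^sub>0 nat) \<Rightarrow>\<^sub>0 'k"

definition mon_dvd :: "'v monomial \<Rightarrow> 'v monomial \<Rightarrow> bool" where
  "mon_dvd u v \<longleftrightarrow> (\<forall>x. Poly_Mapping.lookup u x \<le> Poly_Mapping.lookup v x)"

definition minimal_mon_set :: "'v monomial set \<Rightarrow> bool" where
  "minimal_mon_set A \<longleftrightarrow> (\<forall>u\<in>A. \<forall>v\<in>A. mon_dvd u v \<longrightarrow> u = v)"

(* Variables x_{v,l}, v \<in> V, 0 \<le> l < g v (0-based version of 1 \<le> j \<le> k_i). *)
definition exp_vars :: "'v set \<Rightarrow> ('v \<Rightarrow> nat) \<Rightarrow> ('v \<times> nat) set" where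
  "exp_vars V g = {(v, l). v \<in> V \<and> l < g v}"

(* The projection pi : x_{v,l} \<mapsto> x_v on monomials. *)
definition mon_proj :: "('v \<Rightarrow> nat) \<Rightarrow> ('v \<times> nat) monomial \<Rightarrow> 'v monomial" where
  "mon_proj g w = Abs_poly_mapping (\<lambda>v. \<Sum>l<g v. Poly_Mapping.lookup w (v, l))"

definition expand :: "'v set \<Rightarrow> ('v \<Rightarrow> nat) \<Rightarrow> 'v monomial set \<Rightarrow> ('v \<times> nat) monomial set" where
  "expand V g A = {w. Poly_Mapping.keys w \<subseteq> exp_vars V g \<and> mon_proj g w \<in> A}"

inductive_set mon_alg :: "'v monomial set \<Rightarrow> ('v,'k::field) mpoly set"
  for B :: "'v monomial set" where
  const: "Poly_Mapping.single 0 c \<in> mon_alg B"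
| gen: "m \<in> B \<Longrightarrow> Poly_Mapping.single m 1 \<in> mon_alg B"
| add: "p \<in> mon_alg B \<Longrightarrow> q \<in> mon_alg B \<Longrightarrow> p + q \<in> mon_alg B"
| mult: "p \<in> mon_alg B \<Longrightarrow> q \<in> mon_alg B \<Longrightarrow> p * q \<in> mon_alg B"

definition alg_iso_betw :: "(('v,'k::field) mpoly \<Rightarrow> ('w,'k) mpoly) \<Rightarrow> ('v,'k) mpoly set \<Rightarrow> ('w,'k) mpoly set \<Rightarrow> bool" where
  "alg_iso_betw f P Q \<longleftrightarrow> bij_betw f P Q
     \<and> (\<forall>p\<in>P. \<forall>q\<in>P. f (p + q) = f p + f q \<and> f (p * q) = f p * f q)
     \<and> (\<forall>c. f (Poly_Mapping.single 0 c) = Poly_Mapping.single 0 c)"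

end

theory Submission
  imports Defs
begin


definition push :: "('a \<Rightarrow> 'b) \<Rightarrow> ('a \<Rightarrow>\<^sub>0 'k::comm_ring_1) \<Rightarrow> ('b \<Rightarrow>\<^sub>0 'k)" where
  "push F p = (\<Sum>a\<in>Poly_Mapping.keys p. Poly_Mapping.single (F a) (Poly_Mapping.lookup p a))"

lemma push_superset:
  assumes "finite S" "Poly_Mapping.keys p \<subseteq> S"
  shows "push F p = (\<Sum>a\<in>S. Poly_Mapping.single (F a) (Poly_Mapping.lookup p a))"
  unfolding push_def
  by (rule sum.mono_neutral_left) (use assms in \<open>auto simp: in_keys_iff\<close>)

lemma push_add: "push F (p + q) = push F p + push F q"
proof -
  let ?S = "Poly_Mapping.keys p \<union> Poly_Mapping.keys q"
  have f: "finite ?S" by simp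
  have k: "Poly_Mapping.keys (p + q) \<subseteq> ?S" by (rule keys_add)
  have e1: "push F (p + q) = (\<Sum>a\<in>?S. Poly_Mapping.single (F a) (Poly_Mapping.lookup (p+q) a))"
    by (rule push_superset[OF f k])
  have e2: "push F p = (\<Sum>a\<in>?S. Poly_Mapping.single (F a) (Poly_Mapping.lookup p a))"
    by (rule push_superset[OF f]) blast
  have e3: "push F q = (\<Sum>a\<in>?S. Poly_Mapping.single (F a) (Poly_Mapping.lookup q a))"
    by (rule push_superset[OF f]) blast
  have "(\<Sum>a\<in>?S. Poly_Mapping.single (F a) (Poly_Mapping.lookup (p+q) a))
     = (\<Sum>a\<in>?S. Poly_Mapping.single (F a) (Poly_Mapping.lookup p a) + Poly_Mapping.single (F a) (Poly_Mapping.lookup q a))"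
    by (simp only: lookup_add single_add)
  also have "\<dots> = push F p + push F q"
    by (simp only: sum.distrib e2 e3)
  finally show ?thesis using e1 by simp
qed

lemma push_zero [simp]: "push F 0 = 0"
  by (simp add: push_def)

lemma push_single [simp]: "push F (Poly_Mapping.single a c) = Poly_Mapping.single (F a) c"
  by (cases "c = 0") (auto simp: push_def)

lemma push_sum: "push F (sum f I) = (\<Sum>i\<in>I. push F (f i))"
  by (induction I rule: infinite_finite_induct) (auto simp: push_add)

lemma expansion: "p = (\<Sum>a\<in>Poly_Mapping.keys p. Poly_Mapping.single a (Poly_Mapping.lookup p a))"
proof (rule poly_mapping_eqI)
  fix k
  show "Poly_Mapping.lookup p k = Poly_Mapping.lookup (\<Sum>a\<in>Poly_Mapping.keys p. Poly_Mapping.single a (Poly_Mapping.lookup p a)) k"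
    by (cases "k \<in> Poly_Mapping.keys p")
       (auto simp: lookup_sum lookup_single when_def in_keys_iff sum.delta cong: sum.cong)
qed

lemma push_mult:
  fixes F :: "'a::comm_monoid_add \<Rightarrow> 'b::comm_monoid_add"
  assumes hom: "\<And>a b. F (a + b) = F a + F b"
  shows "push F (p * q) = push F p * (push F q :: 'b \<Rightarrow>\<^sub>0 'k::comm_ring_1)"
proof -
  have "p * q = (\<Sum>a\<in>Poly_Mapping.keys p. Poly_Mapping.single a (Poly_Mapping.lookup p a))
     * (\<Sum>b\<in>Poly_Mapping.keys q. Poly_Mapping.single b (Poly_Mapping.lookup q b))"
    by (subst (1) expansion[of p], subst (1) expansion[of q]) (rule refl)
  also have "\<dots> = (\<Sum>a\<in>Poly_Mapping.keys p. \<Sum>b\<in>Poly_Mapping.keys q.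
       Poly_Mapping.single (a + b) (Poly_Mapping.lookup p a * Poly_Mapping.lookup q b))"
    by (simp only: sum_product mult_single)
  finally have pq: "p * q = \<dots>" .
  have "push F (p * q) = (\<Sum>a\<in>Poly_Mapping.keys p. \<Sum>b\<in>Poly_Mapping.keys q.
       Poly_Mapping.single (F a + F b) (Poly_Mapping.lookup p a * Poly_Mapping.lookup q b))"
    by (simp only: pq push_sum push_single hom)
  also have "\<dots> = push F p * push F q"
    by (simp only: push_def sum_product mult_single)
  finally show ?thesis .
qed

lemma push_compose: "push G (push F p) = push (G \<circ> F) p"
proof -
  have "push G (push F p) = push G (\<Sum>a\<in>Poly_Mapping.keys p. Poly_Mapping.single (F a) (Poly_Mapping.lookup p a))"
    by (simp add: push_def[of F])
  also have "\<dots> = push (G \<circ> F) p" by (simp add: push_sum push_def[of "G \<circ> F"])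
  finally show ?thesis .
qed

lemma push_id_on:
  assumes "\<And>a. a \<in> Poly_Mapping.keys p \<Longrightarrow> G a = a"
  shows "push G p = p"
proof -
  have "push G p = (\<Sum>a\<in>Poly_Mapping.keys p. Poly_Mapping.single a (Poly_Mapping.lookup p a))"
    unfolding push_def using assms by (intro sum.cong) auto
  also have "\<dots> = p" by (rule expansion[symmetric])
  finally show ?thesis .
qed

lemma lookup_map_key:
  assumes [transfer_rule]: "inj f"
  shows "Poly_Mapping.lookup (Poly_Mapping.map_key f p) x = Poly_Mapping.lookup p (f x)"
  by transfer simp

lemma lookup_mon_proj:
  "Poly_Mapping.lookup (mon_proj g w) v = (\<Sum>l<g v. Poly_Mapping.lookup w (v, l))"
proof -
  have sub: "{v. (\<Sum>l<g v. Poly_Mapping.lookup w (v, l)) \<noteq> 0} \<subseteq> fst ` Poly_Mapping.keys w"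
  proof
    fix v assume "v \<in> {v. (\<Sum>l<g v. Poly_Mapping.lookup w (v, l)) \<noteq> 0}"
    then have "(\<Sum>l<g v. Poly_Mapping.lookup w (v, l)) \<noteq> 0" by simp
    then obtain l where "Poly_Mapping.lookup w (v,l) \<noteq> 0"
      using sum.not_neutral_contains_not_neutral by blast
    then have "(v,l) \<in> Poly_Mapping.keys w" by (simp add: in_keys_iff)
    then show "v \<in> fst ` Poly_Mapping.keys w" by (metis fst_conv image_eqI)
  qed
  have "finite {v. (\<Sum>l<g v. Poly_Mapping.lookup w (v, l)) \<noteq> 0}"
    by (rule finite_subset[OF sub]) simp
  then show ?thesis unfolding mon_proj_def by (simp only: lookup_Abs_poly_mapping)
qed

lemma keys_mon_proj:
  assumes "Poly_Mapping.keys w \<subseteq> exp_vars V g"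
  shows "Poly_Mapping.keys (mon_proj g w) \<subseteq> V"
proof
  fix v assume "v \<in> Poly_Mapping.keys (mon_proj g w)"
  then have "(\<Sum>l<g v. Poly_Mapping.lookup w (v, l)) \<noteq> 0"
    by (simp add: in_keys_iff lookup_mon_proj)
  then obtain l where "Poly_Mapping.lookup w (v,l) \<noteq> 0"
    using sum.not_neutral_contains_not_neutral by blast
  then have "(v,l) \<in> exp_vars V g" using assms by (auto simp: in_keys_iff)
  then show "v \<in> V" by (simp add: exp_vars_def)
qed

lemma exp_vars_Sigma: "exp_vars V g = Sigma V (\<lambda>v. {..<g v})"
  by (auto simp: exp_vars_def)

lemma finite_exp_vars: "finite V \<Longrightarrow> finite (exp_vars V g)"
  by (simp add: exp_vars_Sigma)

lemma mon_alg_image: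
  assumes add: "\<And>p q. f (p + q) = f p + f q" and mult: "\<And>p q. f (p * q) = f p * f q"
    and const: "\<And>c. f (Poly_Mapping.single 0 c) = Poly_Mapping.single 0 c"
    and gen: "\<And>m. f (Poly_Mapping.single m 1) = Poly_Mapping.single (M m) 1"
  shows "p \<in> mon_alg B \<Longrightarrow> f p \<in> mon_alg (M ` B)"
proof (induction p rule: mon_alg.induct)
  case (const c)
  then show ?case by (simp only: assms(3) mon_alg.const)
next
  case (gen m)
  then show ?case by (simp only: assms(4) mon_alg.gen imageI)
next
  case (add p q)
  then show ?case by (simp only: assms(1) mon_alg.add)
next
  case (mult p q)
  then show ?case by (simp only: assms(2) mon_alg.mult)
qed

lemma mon_alg_surj:
  assumes add: "\<And>p q. f (p + q) = f p + f q" and mult: "\<And>p q. f (p * q) = f p * f q"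
    and const: "\<And>c. f (Poly_Mapping.single 0 c) = Poly_Mapping.single 0 c"
    and gen: "\<And>m. f (Poly_Mapping.single m 1) = Poly_Mapping.single (M m) 1"
  shows "q \<in> mon_alg (M ` B) \<Longrightarrow> q \<in> f ` mon_alg B"
proof (induction q rule: mon_alg.induct)
  case (const c)
  then show ?case by (metis assms(3) image_eqI mon_alg.const)
next
  case (gen m)
  then obtain b where "b \<in> B" "m = M b" by auto
  then show ?case by (metis assms(4) image_eqI mon_alg.gen)
next
  case (add p q)
  then obtain p1 q1 where "p1 \<in> mon_alg B" "q1 \<in> mon_alg B" "p = f p1" "q = f q1" by auto
  then show ?case by (metis assms(1) image_eqI mon_alg.add)
next
  case (mult p q)
  then obtain p1 q1 where "p1 \<in> mon_alg B" "q1 \<in> mon_alg B" "p = f p1" "q = f q1" by auto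
  then show ?case by (metis assms(2) image_eqI mon_alg.mult)
qed

lemma mon_alg_keys:
  assumes "\<And>b. b \<in> B \<Longrightarrow> Poly_Mapping.keys b \<subseteq> D"
  shows "p \<in> mon_alg B \<Longrightarrow> a \<in> Poly_Mapping.keys p \<Longrightarrow> Poly_Mapping.keys a \<subseteq> D"
proof (induction p arbitrary: a rule: mon_alg.induct)
  case (const c)
  then show ?case by (auto split: if_splits)
next
  case (gen m)
  then show ?case using assms by (auto split: if_splits)
next
  case (add p q)
  then show ?case using keys_add[of p q] by blast
next
  case (mult p q)
  then obtain a1 a2 where "a = a1 + a2" "a1 \<in> Poly_Mapping.keys p" "a2 \<in> Poly_Mapping.keys q"
    using keys_mult[of p q] by blast
  then show ?case using mult keys_add[of a1 a2] by blast
qed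



theorem lemma2p10:
  fixes A :: "nat monomial set" and n :: nat and \<alpha> :: "nat \<Rightarrow> nat" and i :: nat
  assumes "finite A"
    and "\<forall>m\<in>A. Poly_Mapping.keys m \<subseteq> {..<n}"
    and "minimal_mon_set A"
    and "\<forall>j<n. \<alpha> j \<ge> 1"
    and "i < n"
  defines "\<beta> \<equiv> \<alpha>(i := \<alpha> i + 1)"
    and "\<gamma> \<equiv> (\<lambda>v::nat \<times> nat. if v = (i, \<alpha> i - 1) then 2 else 1)"
  shows "\<exists>(\<sigma> :: (nat \<times> nat) \<times> nat \<Rightarrow> nat \<times> nat) (\<phi> :: ((nat \<times> nat) \<times> nat, 'k::field) mpoly \<Rightarrow> (nat \<times> nat, 'k) mpoly).
     bij_betw \<sigma> (exp_vars (exp_vars {..<n} \<alpha>) \<gamma>) (exp_vars {..<n} \<beta>)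
     \<and> alg_iso_betw \<phi> (mon_alg (expand (exp_vars {..<n} \<alpha>) \<gamma> (expand {..<n} \<alpha> A)))
                       (mon_alg (expand {..<n} \<beta> A))
     \<and> (\<forall>m \<in> expand (exp_vars {..<n} \<alpha>) \<gamma> (expand {..<n} \<alpha> A).
          \<exists>m'. Poly_Mapping.keys m' \<subseteq> exp_vars {..<n} \<beta>
             \<and> (\<forall>v \<in> exp_vars (exp_vars {..<n} \<alpha>) \<gamma>. Poly_Mapping.lookup m' (\<sigma> v) = Poly_Mapping.lookup m v)
             \<and> \<phi> (Poly_Mapping.single m 1) = Poly_Mapping.single m' 1)"
  proof -
  note \<beta>_def = assms(6) and \<gamma>_def = assms(7)
  let ?V = "exp_vars {..<n} \<alpha>"
  define D where "D = exp_vars ?V \<gamma>"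
  define T where "T = exp_vars {..<n} \<beta>"
  define \<tau> :: "nat \<times> nat \<Rightarrow> (nat \<times> nat) \<times> nat"
    where "\<tau> x = (if x = (i, \<alpha> i) then ((i, \<alpha> i - 1), 1) else (x, 0))" for x
  define \<sigma> :: "(nat \<times> nat) \<times> nat \<Rightarrow> nat \<times> nat"
    where "\<sigma> y = (if snd y = 0 then fst y else (i, \<alpha> i))" for y
  have ai: "\<alpha> i \<ge> 1" using assms(4,5) by auto
  have inj\<tau>: "inj \<tau>" unfolding inj_def \<tau>_def by auto
  have st: "\<sigma> (\<tau> x) = x" for x unfolding \<sigma>_def \<tau>_def by auto
  have ts: "\<tau> (\<sigma> y) = y" if "y \<in> D" for y
    using that ai unfolding D_def exp_vars_def \<sigma>_def \<tau>_def \<gamma>_def by (auto split: if_splits)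
  have \<sigma>D: "\<sigma> ` D \<subseteq> T"
    using ai unfolding D_def T_def exp_vars_def \<sigma>_def \<beta>_def \<gamma>_def by (auto split: if_splits)
  have \<tau>T: "\<tau> ` T \<subseteq> D"
    using ai unfolding D_def T_def exp_vars_def \<tau>_def \<beta>_def \<gamma>_def by (auto split: if_splits)
  have bij: "bij_betw \<sigma> D T"
    by (rule bij_betw_byWitness[where f'=\<tau>]) (use ts st \<sigma>D \<tau>T in auto)
  have finD: "finite D" unfolding D_def by (intro finite_exp_vars) simp
  define M :: "((nat \<times> nat) \<times> nat) monomial \<Rightarrow> (nat \<times> nat) monomial"
    where "M = Poly_Mapping.map_key \<tau>"
  have lookupM: "Poly_Mapping.lookup (M m) x = Poly_Mapping.lookup m (\<tau> x)" for m x
    unfolding M_def by (rule lookup_map_key[OF inj\<tau>])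
  have M_add: "M (a + b) = M a + M b" for a b
    unfolding M_def by (rule map_key_plus[OF inj\<tau>])
  have M0: "M 0 = 0" unfolding M_def by (rule map_key_zero[OF inj\<tau>])
  define N :: "(nat \<times> nat) monomial \<Rightarrow> ((nat \<times> nat) \<times> nat) monomial"
    where "N m' = Abs_poly_mapping (\<lambda>v. if v \<in> D then Poly_Mapping.lookup m' (\<sigma> v) else 0)" for m'
  have lookupN: "Poly_Mapping.lookup (N m') v = (if v \<in> D then Poly_Mapping.lookup m' (\<sigma> v) else 0)" for m' v
  proof -
    have "finite {v. (if v \<in> D then Poly_Mapping.lookup m' (\<sigma> v) else 0) \<noteq> 0}"
      by (rule finite_subset[OF _ finD]) auto
    then show ?thesis unfolding N_def by simp
  qed
  have NM: "N (M a) = a" if "Poly_Mapping.keys a \<subseteq> D" for a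
  proof (rule poly_mapping_eqI)
    fix v show "Poly_Mapping.lookup (N (M a)) v = Poly_Mapping.lookup a v"
      using that by (auto simp: lookupN lookupM ts in_keys_iff)
  qed
  have MN: "M (N m') = m'" if "Poly_Mapping.keys m' \<subseteq> T" for m'
  proof (rule poly_mapping_eqI)
    fix x show "Poly_Mapping.lookup (M (N m')) x = Poly_Mapping.lookup m' x"
    proof (cases "x \<in> Poly_Mapping.keys m'")
      case True
      then have "\<tau> x \<in> D" using that \<tau>T by blast
      then show ?thesis by (simp add: lookupN lookupM st)
    next
      case False
      then have "Poly_Mapping.lookup m' x = 0" by (simp add: in_keys_iff)
      then show ?thesis by (simp add: lookupN lookupM st)
    qed
  qed
  have keysM: "Poly_Mapping.keys (M a) \<subseteq> T" if "Poly_Mapping.keys a \<subseteq> D" for a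
  proof
    fix x assume "x \<in> Poly_Mapping.keys (M a)"
    then have "\<tau> x \<in> D" using that by (auto simp: in_keys_iff lookupM)
    then have "\<sigma> (\<tau> x) \<in> T" using \<sigma>D by blast
    then show "x \<in> T" by (simp add: st)
  qed
  have keysN: "Poly_Mapping.keys (N m') \<subseteq> D" for m'
    by (auto simp: in_keys_iff lookupN split: if_splits)
  have proj: "mon_proj \<beta> (M m) = mon_proj \<alpha> (mon_proj \<gamma> m)" for m
  proof (rule poly_mapping_eqI)
    fix v
    show "Poly_Mapping.lookup (mon_proj \<beta> (M m)) v = Poly_Mapping.lookup (mon_proj \<alpha> (mon_proj \<gamma> m)) v"
    proof (cases "v = i")
      case False
      then show ?thesis by (simp add: lookup_mon_proj lookupM \<beta>_def \<gamma>_def \<tau>_def)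
    next
      case True
      obtain a where a: "\<alpha> i = Suc a" using ai by (cases "\<alpha> i") auto
      have c1: "(\<Sum>l<a. Poly_Mapping.lookup m (\<tau> (i,l))) = (\<Sum>l<a. Poly_Mapping.lookup m ((i,l),0))"
        by (rule sum.cong) (auto simp: \<tau>_def a)
      have c2: "(\<Sum>l<a. \<Sum>k<\<gamma> (i,l). Poly_Mapping.lookup m ((i,l),k)) = (\<Sum>l<a. Poly_Mapping.lookup m ((i,l),0))"
        by (rule sum.cong) (auto simp: \<gamma>_def a)
      have "Poly_Mapping.lookup (mon_proj \<beta> (M m)) v = (\<Sum>l<Suc (Suc a). Poly_Mapping.lookup m (\<tau> (i,l)))"
        by (simp add: True lookup_mon_proj lookupM \<beta>_def a)
      also have "\<dots> = (\<Sum>l<a. Poly_Mapping.lookup m (\<tau> (i,l))) + Poly_Mapping.lookup m (\<tau> (i,a)) + Poly_Mapping.lookup m (\<tau> (i, Suc a))"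
        by (simp only: sum.lessThan_Suc)
      also have "\<dots> = (\<Sum>l<a. Poly_Mapping.lookup m ((i,l),0)) + Poly_Mapping.lookup m ((i,a),0) + Poly_Mapping.lookup m ((i,a),1)"
        by (simp only: c1) (simp add: \<tau>_def a)
      also have "\<dots> = (\<Sum>l<a. \<Sum>k<\<gamma> (i,l). Poly_Mapping.lookup m ((i,l),k)) + (\<Sum>k<\<gamma> (i,a). Poly_Mapping.lookup m ((i,a),k))"
        by (simp only: c2) (simp add: \<gamma>_def a numeral_2_eq_2)
      also have "\<dots> = (\<Sum>l<Suc a. \<Sum>k<\<gamma> (i,l). Poly_Mapping.lookup m ((i,l),k))"
        by (simp only: sum.lessThan_Suc)
      also have "\<dots> = Poly_Mapping.lookup (mon_proj \<alpha> (mon_proj \<gamma> m)) v"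
        by (simp add: True lookup_mon_proj a)
      finally show ?thesis .
    qed
  qed
  define E1 where "E1 = expand ?V \<gamma> (expand {..<n} \<alpha> A)"
  define E2 where "E2 = expand {..<n} \<beta> A"
  have E1D: "Poly_Mapping.keys b \<subseteq> D" if "b \<in> E1" for b
    using that unfolding E1_def expand_def D_def by auto
  have ME: "M ` E1 = E2"
  proof
    show "M ` E1 \<subseteq> E2"
    proof
      fix x assume "x \<in> M ` E1"
      then obtain m where m: "m \<in> E1" "x = M m" by auto
      then show "x \<in> E2" using keysM[OF E1D[OF m(1)]] proj[of m]
        unfolding E1_def E2_def expand_def T_def by auto
    qed
  next
    show "E2 \<subseteq> M ` E1"
    proof
      fix m' assume m': "m' \<in> E2"
      then have kT: "Poly_Mapping.keys m' \<subseteq> T" unfolding E2_def expand_def T_def by auto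
      have "N m' \<in> E1"
        using keysN[of m'] keys_mon_proj[of "N m'" ?V \<gamma>] proj[of "N m'"] MN[OF kT] m'
        unfolding E1_def E2_def expand_def D_def by auto
      moreover have "m' = M (N m')" using MN[OF kT] by simp
      ultimately show "m' \<in> M ` E1" by blast
    qed
  qed
  define \<phi> :: "((nat \<times> nat) \<times> nat, 'k) mpoly \<Rightarrow> (nat \<times> nat, 'k) mpoly" where "\<phi> = push M"
  have padd: "\<phi> (p + q) = \<phi> p + \<phi> q" for p q unfolding \<phi>_def by (rule push_add)
  have pmult: "\<phi> (p * q) = \<phi> p * \<phi> q" for p q unfolding \<phi>_def by (rule push_mult[OF M_add])
  have pconst: "\<phi> (Poly_Mapping.single 0 c) = Poly_Mapping.single 0 c" for c
    unfolding \<phi>_def by (simp add: M0)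
  have pgen: "\<phi> (Poly_Mapping.single m 1) = Poly_Mapping.single (M m) 1" for m
    unfolding \<phi>_def by simp
  have img: "\<phi> ` mon_alg E1 = mon_alg E2"
  proof
    show "\<phi> ` mon_alg E1 \<subseteq> mon_alg E2"
      using mon_alg_image[of \<phi> M, OF padd pmult pconst pgen] ME by blast
    show "mon_alg E2 \<subseteq> \<phi> ` mon_alg E1"
      using mon_alg_surj[of \<phi> M, OF padd pmult pconst pgen] ME by blast
  qed
  have inj: "inj_on \<phi> (mon_alg E1)"
  proof (rule inj_on_inverseI)
    fix p :: "((nat \<times> nat) \<times> nat, 'k) mpoly" assume p: "p \<in> mon_alg E1"
    have "push N (\<phi> p) = push (N \<circ> M) p" unfolding \<phi>_def by (rule push_compose)
    also have "\<dots> = p"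
      by (rule push_id_on) (use mon_alg_keys[OF E1D p] NM in auto)
    finally show "push N (\<phi> p) = p" .
  qed
  have iso: "alg_iso_betw \<phi> (mon_alg E1) (mon_alg E2)"
    unfolding alg_iso_betw_def bij_betw_def by (simp add: inj img padd pmult pconst)
  show ?thesis
  proof (intro exI conjI)
    show "bij_betw \<sigma> (exp_vars (exp_vars {..<n} \<alpha>) \<gamma>) (exp_vars {..<n} \<beta>)"
      using bij unfolding D_def T_def .
    show "alg_iso_betw \<phi> (mon_alg (expand (exp_vars {..<n} \<alpha>) \<gamma> (expand {..<n} \<alpha> A)))
                       (mon_alg (expand {..<n} \<beta> A))"
      using iso unfolding E1_def E2_def .
    show "\<forall>m \<in> expand (exp_vars {..<n} \<alpha>) \<gamma> (expand {..<n} \<alpha> A).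
          \<exists>m'. Poly_Mapping.keys m' \<subseteq> exp_vars {..<n} \<beta>
             \<and> (\<forall>v \<in> exp_vars (exp_vars {..<n} \<alpha>) \<gamma>. Poly_Mapping.lookup m' (\<sigma> v) = Poly_Mapping.lookup m v)
             \<and> \<phi> (Poly_Mapping.single m 1) = Poly_Mapping.single m' 1"
    proof
      fix m assume m: "m \<in> expand (exp_vars {..<n} \<alpha>) \<gamma> (expand {..<n} \<alpha> A)"
      then have kD: "Poly_Mapping.keys m \<subseteq> D" using E1D unfolding E1_def by blast
      show "\<exists>m'. Poly_Mapping.keys m' \<subseteq> exp_vars {..<n} \<beta>
             \<and> (\<forall>v \<in> exp_vars (exp_vars {..<n} \<alpha>) \<gamma>. Poly_Mapping.lookup m' (\<sigma> v) = Poly_Mapping.lookup m v)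
             \<and> \<phi> (Poly_Mapping.single m 1) = Poly_Mapping.single m' 1"
        using keysM[OF kD] pgen[of m] ts unfolding T_def D_def by (intro exI[of _ "M m"]) (auto simp: lookupM)
    qed
  qed
qed

end
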